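(* Let $G$ be connected with weights $w:E\to\mathbb{R}_{>0}$, let $\pi$ be a vertex order and let $m_C$ be a customized metric on $G_\pi^*$. Run the perfect customization: set $m:=m_C$, and process the edges $\{x,y\}$ of $G_\pi^*$, with $x$ the lower-ranked endpoint, in nonincreasing order of the rank of $x$ (ties arbitrary); when processing $\{x,y\}$, for every vertex $z\neq y$ of rank larger than the rank of $x$ that is adjacent to both $x$ and $y$ in $G_\pi^*$, set $m(\{x,y\}):=\min\{m(\{x,y\}),m(\{x,z\})+m(\{z,y\})\}$ using current values. Then the resulting metric $m_P$ satisfies $m_P(\{x,y\})=\mathrm{dist}_I(x,y)$ for every edge $\{x,y\}$ of $G_\pi^*$, i.e. $m_P$ is the perfect metric.
   Context: Let $G=(V,E)$ be a finite simple undirected graph with $n=|V|$ vertices. A vertex order is a bijection $\pi:\{1,\dots,n\}\to V$; the rank of $v$ is $\pi^{-1}(v)$. Contracting a vertex $v$ in a graph means deleting $v$ and its incident edges and adding an edge between every pair of former neighbors of $v$ that are not already adjacent. The core graph $G_{\pi,i}$ is obtained from $G$ by contracting $\pi(1),\dots,\pi(i-1)$ in this order. $G_\pi^*$ is the graph on $V$ whose edge set is the union of the edge sets of all $G_{\pi,i}$, $i=1,\dots,n$ (i.e. $G$ together with all edges inserted during the contractions). Let $w:E\to\mathbb{R}_{>0}$ and let $\mathrm{dist}_I(s,t)$ be the shortest $s$–$t$ path length in $(G,w)$. A metric is a map $m$ assigning to every edge of $G_\pi^*$ a value in $\mathbb{R}_{>0}\cup\{\infty\}$; the $m$-length of a path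 in $G_\pi^*$ is the sum of $m$ over its edges. An up-down path is a path $v_0,\dots,v_k$ in $G_\pi^*$ for which there is $j$ with the ranks strictly increasing along $v_0,\dots,v_j$ and strictly decreasing along $v_j,\dots,v_k$. $\mathrm{dist}_A(s,t)$ is the minimum $m$-length of an $s$–$t$ path in $G_\pi^*$, and $\mathrm{dist}_{UD}(s,t)$ the minimum $m$-length of an up-down $s$–$t$ path ($\infty$ if none). The metric $m$ respects $w$ if $\mathrm{dist}_A(s,t)=\mathrm{dist}_I(s,t)$ for all $s,t$; it is customized if moreover $\mathrm{dist}_{UD}(s,t)=\mathrm{dist}_A(s,t)$ for all $s,t$. The perfect metric is the metric $m_P(\{x,y\})=\mathrm{dist}_I(x,y)$ for every edge $\{x,y\}$ of $G_\pi^*$. *)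

theory Defs
  imports Main "HOL-Library.Extended_Real"
begin

definition simple_graph :: "'a set \<Rightarrow> 'a set set \<Rightarrow> bool" where
  "simple_graph V E \<longleftrightarrow> finite V \<and>
     E \<subseteq> {{a, b} | a b. a \<noteq> b \<and> a \<in> V \<and> b \<in> V}"

definition is_path :: "'a set set \<Rightarrow> 'a list \<Rightarrow> 'a \<Rightarrow> 'a \<Rightarrow> bool" where
  "is_path F p s t \<longleftrightarrow> p \<noteq> [] \<and> hd p = s \<and> last p = t \<and> distinct p \<and>
     (\<forall>i < length p - 1. {p ! i, p ! Suc i} \<in> F)"

definition connected_graph :: "'a set \<Rightarrow> 'a set set \<Rightarrow> bool" where
  "connected_graph V E \<longleftrightarrow> (\<forall>s\<in>V. \<forall>t\<in>V. \<exists>p. is_path E p s t)"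

definition plen :: "('a set \<Rightarrow> ereal) \<Rightarrow> 'a list \<Rightarrow> ereal" where
  "plen m p = sum_list (map (\<lambda>i. m {p ! i, p ! Suc i}) [0..<length p - 1])"

definition dist :: "'a set set \<Rightarrow> ('a set \<Rightarrow> ereal) \<Rightarrow> 'a \<Rightarrow> 'a \<Rightarrow> ereal" where
  "dist F m s t = Inf {plen m p | p. is_path F p s t}"

definition dist_I :: "'a set set \<Rightarrow> ('a set \<Rightarrow> real) \<Rightarrow> 'a \<Rightarrow> 'a \<Rightarrow> ereal" where
  "dist_I E w s t = dist E (\<lambda>e. ereal (w e)) s t"

definition vertex_order :: "'a set \<Rightarrow> (nat \<Rightarrow> 'a) \<Rightarrow> bool" where
  "vertex_order V \<pi> \<longleftrightarrow> bij_betw \<pi> {1..card V} V"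

definition rank :: "'a set \<Rightarrow> (nat \<Rightarrow> 'a) \<Rightarrow> 'a \<Rightarrow> nat" where
  "rank V \<pi> v = inv_into {1..card V} \<pi> v"

definition contract :: "'a set set \<Rightarrow> 'a \<Rightarrow> 'a set set" where
  "contract F v = {e \<in> F. v \<notin> e} \<union>
     {{a, b} | a b. a \<noteq> b \<and> {v, a} \<in> F \<and> {v, b} \<in> F}"

text \<open>core_edges E pi k: edges of the graph obtained by contracting
  pi 1, ..., pi k in this order; so the core graph G_{pi,i} has edge set
  core_edges E pi (i - 1).\<close>

fun core_edges :: "'a set set \<Rightarrow> (nat \<Rightarrow> 'a) \<Rightarrow> nat \<Rightarrow> 'a set set" where
  "core_edges E \<pi> 0 = E"
| "core_edges E \<pi> (Suc k) = contract (core_edges E \<pi> k) (\<pi> (Suc k))"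

definition Gstar :: "'a set \<Rightarrow> 'a set set \<Rightarrow> (nat \<Rightarrow> 'a) \<Rightarrow> 'a set set" where
  "Gstar V E \<pi> = (\<Union>i\<in>{1..card V}. core_edges E \<pi> (i - 1))"

definition is_metric :: "'a set \<Rightarrow> 'a set set \<Rightarrow> (nat \<Rightarrow> 'a) \<Rightarrow> ('a set \<Rightarrow> ereal) \<Rightarrow> bool" where
  "is_metric V E \<pi> m \<longleftrightarrow> (\<forall>e \<in> Gstar V E \<pi>. m e > 0)"

definition dist_A :: "'a set \<Rightarrow> 'a set set \<Rightarrow> (nat \<Rightarrow> 'a) \<Rightarrow> ('a set \<Rightarrow> ereal) \<Rightarrow> 'a \<Rightarrow> 'a \<Rightarrow> ereal" where
  "dist_A V E \<pi> m s t = dist (Gstar V E \<pi>) m s t"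

definition up_down :: "('a \<Rightarrow> nat) \<Rightarrow> 'a list \<Rightarrow> bool" where
  "up_down rk p \<longleftrightarrow> (\<exists>j < length p.
     sorted_wrt (<) (map rk (take (Suc j) p)) \<and> sorted_wrt (>) (map rk (drop j p)))"

definition dist_UD :: "'a set \<Rightarrow> 'a set set \<Rightarrow> (nat \<Rightarrow> 'a) \<Rightarrow> ('a set \<Rightarrow> ereal) \<Rightarrow> 'a \<Rightarrow> 'a \<Rightarrow> ereal" where
  "dist_UD V E \<pi> m s t =
     Inf {plen m p | p. is_path (Gstar V E \<pi>) p s t \<and> up_down (rank V \<pi>) p}"

definition respects_w :: "'a set \<Rightarrow> 'a set set \<Rightarrow> (nat \<Rightarrow> 'a) \<Rightarrow> ('a set \<Rightarrow> real) \<Rightarrow> ('a set \<Rightarrow> ereal) \<Rightarrow> bool" where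
  "respects_w V E \<pi> w m \<longleftrightarrow> (\<forall>s\<in>V. \<forall>t\<in>V. dist_A V E \<pi> m s t = dist_I E w s t)"

definition customized :: "'a set \<Rightarrow> 'a set set \<Rightarrow> (nat \<Rightarrow> 'a) \<Rightarrow> ('a set \<Rightarrow> real) \<Rightarrow> ('a set \<Rightarrow> ereal) \<Rightarrow> bool" where
  "customized V E \<pi> w m \<longleftrightarrow> is_metric V E \<pi> m \<and> respects_w V E \<pi> w m \<and>
     (\<forall>s\<in>V. \<forall>t\<in>V. dist_UD V E \<pi> m s t = dist_A V E \<pi> m s t)"

text \<open>Since processing {x,y} modifies only m{x,y}, doing these updates one z after
  another is the same as one update with the minimum over all such z.\<close>

definition perfect_step :: "'a set \<Rightarrow> 'a set set \<Rightarrow> (nat \<Rightarrow> 'a) \<Rightarrow>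
    ('a set \<Rightarrow> ereal) \<Rightarrow> 'a \<times> 'a \<Rightarrow> ('a set \<Rightarrow> ereal)" where
  "perfect_step V E \<pi> m xy = (case xy of (x, y) \<Rightarrow>
     m({x, y} := min (m {x, y})
        (INF z \<in> {z. z \<noteq> y \<and> rank V \<pi> z > rank V \<pi> x \<and>
                    {x, z} \<in> Gstar V E \<pi> \<and> {z, y} \<in> Gstar V E \<pi>}.
           m {x, z} + m {z, y})))"

definition valid_order :: "'a set \<Rightarrow> 'a set set \<Rightarrow> (nat \<Rightarrow> 'a) \<Rightarrow> ('a \<times> 'a) list \<Rightarrow> bool" where
  "valid_order V E \<pi> es \<longleftrightarrow>
     (\<forall>(x, y) \<in> set es. rank V \<pi> x < rank V \<pi> y) \<and>
     distinct (map (\<lambda>(x, y). {x, y}) es) \<and>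
     set (map (\<lambda>(x, y). {x, y}) es) = Gstar V E \<pi> \<and>
     sorted_wrt (\<lambda>(x, _) (x', _). rank V \<pi> x \<ge> rank V \<pi> x') es"

definition perfect_customization :: "'a set \<Rightarrow> 'a set set \<Rightarrow> (nat \<Rightarrow> 'a) \<Rightarrow>
    ('a \<times> 'a) list \<Rightarrow> ('a set \<Rightarrow> ereal) \<Rightarrow> ('a set \<Rightarrow> ereal)" where
  "perfect_customization V E \<pi> es m = foldl (perfect_step V E \<pi>) m es"

end

theory Submission
  imports Defs
begin


fun walk :: "'a set set \<Rightarrow> 'a list \<Rightarrow> bool" where
  "walk F [] = True" | "walk F [a] = True" | "walk F (a#b#p) = ({a,b}\<in>F \<and> walk F (b#p))"

fun pl :: "('a set \<Rightarrow> ereal) \<Rightarrow> 'a list \<Rightarrow> ereal" where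
  "pl m [] = 0" | "pl m [a] = 0" | "pl m (a#b#p) = m {a,b} + pl m (b#p)"

lemma walk_nth: "walk F p \<longleftrightarrow> (\<forall>i < length p - 1. {p ! i, p ! Suc i} \<in> F)"
proof (induction p rule: induct_list012)
  case (3 a b p)
  show ?case
  proof
    assume "walk F (a#b#p)"
    then show "\<forall>i < length (a#b#p) - 1. {(a#b#p) ! i, (a#b#p) ! Suc i} \<in> F"
      using 3 by (auto simp: less_Suc_eq_0_disj)
  next
    assume h: "\<forall>i < length (a#b#p) - 1. {(a#b#p) ! i, (a#b#p) ! Suc i} \<in> F"
    have "{a,b}\<in>F" using h[rule_format, of 0] by simp
    moreover have "walk F (b#p)" using 3 h by auto
    ultimately show "walk F (a#b#p)" by simp
  qed
qed auto

lemma pl_eq: "plen m p = pl m p"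
proof (induction m p rule: pl.induct)
  case (3 m a b p)
  have "[0..<length (a#b#p) - 1] = 0 # map Suc [0..<length (b#p) - 1]"
    by (simp add: upt_conv_Cons map_Suc_upt del: upt_Suc)
  then show ?case using 3 by (simp add: plen_def o_def)
qed (auto simp: plen_def)

lemma is_path_rec: "is_path F p s t \<longleftrightarrow> p \<noteq> [] \<and> hd p = s \<and> last p = t \<and> distinct p \<and> walk F p"
  unfolding is_path_def walk_nth by auto

lemma walk_append: "walk F (p @ a # q) \<longleftrightarrow> walk F (p @ [a]) \<and> walk F (a # q)"
proof (induction p rule: induct_list012)
  case 2 then show ?case by (cases q) auto
qed auto

lemma pl_append: "pl m (p @ a # q) = pl m (p @ [a]) + pl m (a # q)"
proof (induction p rule: induct_list012)
  case (3 x y zs)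
  then show ?case by (simp add: add.assoc)
next
  case (2 x) then show ?case by (cases q) auto
qed auto

lemma walk_rev: "walk F (rev p) = walk F p"
proof (induction p rule: walk.induct)
  case (3 F a b p)
  have "rev (a#b#p) = rev p @ b # [a]" by simp
  then show ?case using 3 walk_append[of F "rev p" b "[a]"] by (auto simp: insert_commute)
qed auto

lemma pl_rev: "pl m (rev p) = pl m p"
proof (induction m p rule: pl.induct)
  case (3 m a b p)
  have "rev (a#b#p) = rev p @ b # [a]" by simp
  then show ?case using 3 pl_append[of m "rev p" b "[a]"] by (simp add: insert_commute add.commute)
qed auto

lemma pl_nonneg: "walk F p \<Longrightarrow> \<forall>e\<in>F. m e \<ge> 0 \<Longrightarrow> pl m p \<ge> 0"
  by (induction p rule: walk.induct) auto

lemma is_path_rev: "is_path F p s t \<Longrightarrow> is_path F (rev p) t s"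
  unfolding is_path_rec by (auto simp: walk_rev hd_rev last_rev)

lemma dist_sub: "{plen m p | p. is_path F p s t} \<subseteq> {plen m p | p. is_path F p t s}"
proof
  fix x assume "x \<in> {plen m p | p. is_path F p s t}"
  then obtain p where "x = plen m p" "is_path F p s t" by blast
  then have "x = plen m (rev p)" "is_path F (rev p) t s"
    by (simp_all add: pl_eq pl_rev is_path_rev)
  then show "x \<in> {plen m p | p. is_path F p t s}" by blast
qed

lemma dist_sym: "dist F m s t = dist F m t s"
  unfolding dist_def by (rule arg_cong[where f=Inf], rule subset_antisym[OF dist_sub dist_sub])


lemma path_concat:
  assumes "is_path F p s z" "is_path F q z t" "\<forall>e\<in>F. m e \<ge> 0"
  shows "\<exists>r. is_path F r s t \<and> set r \<subseteq> set p \<union> set q \<and> pl m r \<le> pl m p + pl m q"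
  using assms(1)
proof (induction p arbitrary: s)
  case Nil then show ?case by (simp add: is_path_rec)
next
  case (Cons a p')
  have a: "a = s" using Cons.prems by (simp add: is_path_def)
  have q: "q \<noteq> []" "hd q = z" "last q = t" "distinct q" "walk F q" using assms(2) by (auto simp: is_path_rec)
  have wp: "walk F (a#p')" using Cons.prems unfolding is_path_rec by blast
  show ?case
  proof (cases "a \<in> set q")
    case True
    then obtain q1 q2 where qs: "q = q1 @ a # q2" by (meson split_list)
    have "walk F (a#q2)" using q(5) qs walk_append by metis
    moreover have "last (a#q2) = t" using q(3) qs by simp
    moreover have "distinct (a#q2)" using q(4) qs by simp
    ultimately have P: "is_path F (a#q2) s t" using a by (simp add: is_path_rec)
    have "pl m q = pl m (q1@[a]) + pl m (a#q2)" using qs pl_append by metis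
    moreover have "pl m (q1@[a]) \<ge> 0" using q(5) qs walk_append pl_nonneg assms(3) by metis
    moreover have "pl m (a#p') \<ge> 0" using wp pl_nonneg assms(3) by metis
    ultimately have "pl m (a#q2) \<le> pl m q" by (simp add: add_increasing)
    then have "pl m (a#q2) \<le> pl m (a#p') + pl m q"
      using \<open>pl m (a#p') \<ge> 0\<close> by (simp add: add_increasing)
    then show ?thesis using P qs by auto
  next
    case False
    have "p' \<noteq> []"
    proof
      assume "p' = []"
      then have "a = z" using Cons.prems by (auto simp: is_path_def)
      then show False using False q by (metis hd_in_set)
    qed
    then obtain b p'' where pb: "p' = b # p''" by (cases p') auto
    have "is_path F p' b z" using Cons.prems pb by (auto simp: is_path_rec)
    then obtain r where r: "is_path F r b t" "set r \<subseteq> set p' \<union> set q" "pl m r \<le> pl m p' + pl m q"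
      using Cons.IH by blast
    obtain r' where r': "r = b # r'" using r(1) by (cases r) (auto simp: is_path_rec)
    have ab: "{a,b} \<in> F" using wp pb by simp
    have "a \<notin> set r" using r(2) False Cons.prems by (auto simp: is_path_rec)
    then have P: "is_path F (a#r) s t" using r(1) r' ab a by (auto simp: is_path_rec)
    have "pl m (a#r) = m {a,b} + pl m r" using r' by simp
    also have "\<dots> \<le> m {a,b} + (pl m p' + pl m q)" using r(3) by (simp add: add_left_mono)
    also have "\<dots> = pl m (a#p') + pl m q" using pb by (simp add: add.assoc)
    finally show ?thesis using P r(2) by (intro exI[of _ "a#r"]) auto
  qed
qed

lemma walk_set:
  assumes "\<forall>e\<in>F. \<exists>a b. e = {a,b} \<and> a \<in> VV \<and> b \<in> VV"
  shows "walk F p \<Longrightarrow> p \<noteq> [] \<Longrightarrow> set p \<subseteq> insert (hd p) VV"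
proof (induction p rule: induct_list012)
  case (3 a b p)
  have "{a,b} \<in> F" using 3(3) by simp
  then obtain c d where cd: "{a,b} = {c,d}" "c \<in> VV" "d \<in> VV" using assms by blast
  have "a \<in> {a,b}" "b \<in> {a,b}" by simp_all
  then have "a \<in> {c,d}" "b \<in> {c,d}" using cd(1) by simp_all
  then have ab: "a \<in> VV" "b \<in> VV" using cd by blast+
  have "walk F (b#p)" using 3(3) by simp
  then have "set (b#p) \<subseteq> insert b VV" using 3(2) by simp
  then show ?case using ab by auto
qed auto


lemma paths_finite:
  assumes "\<forall>e\<in>F. \<exists>a b. e = {a,b} \<and> a \<in> VV \<and> b \<in> VV" "finite VV"
  shows "finite {plen m p | p. is_path F p s t}"
proof -
  have "{p. is_path F p s t} \<subseteq> {xs. set xs \<subseteq> insert s VV \<and> distinct xs}"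
    using walk_set[OF assms(1)] by (auto simp: is_path_rec)
  then have "finite {p. is_path F p s t}"
    using finite_subset_distinct[of "insert s VV"] assms(2) finite_subset by blast
  moreover have "{plen m p | p. is_path F p s t} = plen m ` {p. is_path F p s t}" by blast
  ultimately show ?thesis by simp
qed

lemma dist_nonneg: "\<forall>e\<in>F. m e \<ge> 0 \<Longrightarrow> dist F m s t \<ge> 0"
  unfolding dist_def by (rule Inf_greatest) (auto simp: pl_eq is_path_rec intro: pl_nonneg)

lemma dist_attained:
  assumes "\<forall>e\<in>F. \<exists>a b. e = {a,b} \<and> a \<in> VV \<and> b \<in> VV" "finite VV"
    and "dist F m s t \<noteq> \<infinity>"
  shows "\<exists>p. is_path F p s t \<and> plen m p = dist F m s t"
proof -
  let ?A = "{plen m p | p. is_path F p s t}"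
  have "?A \<noteq> {}" using assms(3) unfolding dist_def by (metis Inf_empty top_ereal_def)
  then have "Inf ?A \<in> ?A"
    using paths_finite[OF assms(1,2)] by (intro finite_Inf_in) (auto simp: inf_min min_def)
  then show ?thesis unfolding dist_def by auto
qed

lemma dist_tri:
  assumes "\<forall>e\<in>F. \<exists>a b. e = {a,b} \<and> a \<in> VV \<and> b \<in> VV" "finite VV" "\<forall>e\<in>F. m e \<ge> 0"
  shows "dist F m s t \<le> dist F m s z + dist F m z t"
proof (cases "dist F m s z = \<infinity> \<or> dist F m z t = \<infinity>")
  case True
  have "dist F m s z \<ge> 0" "dist F m z t \<ge> 0" using dist_nonneg[OF assms(3)] by blast+
  then have eq: "dist F m s z + dist F m z t = \<infinity>" using True by auto
  show ?thesis unfolding eq by simp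
next
  case False
  then obtain p q where p: "is_path F p s z" "plen m p = dist F m s z"
    and q: "is_path F q z t" "plen m q = dist F m z t"
    using dist_attained[OF assms(1,2)] by metis
  obtain r where r: "is_path F r s t" "pl m r \<le> pl m p + pl m q"
    using path_concat[OF p(1) q(1) assms(3)] by blast
  have "dist F m s t \<le> plen m r" unfolding dist_def using r(1) by (blast intro: Inf_lower)
  also have "\<dots> \<le> dist F m s z + dist F m z t" using r(2) p(2) q(2) by (simp add: pl_eq)
  finally show ?thesis .
qed



lemma C1: "simple_graph V E \<Longrightarrow> e \<in> core_edges E \<pi> k \<Longrightarrow> \<exists>a b. e = {a,b} \<and> a \<noteq> b \<and> a \<in> V \<and> b \<in> V"
proof (induction k arbitrary: e)
  case 0 then show ?case by (auto simp: simple_graph_def)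
next
  case (Suc k)
  let ?F = "core_edges E \<pi> k" and ?v = "\<pi> (Suc k)"
  have "e \<in> contract ?F ?v" using Suc.prems by simp
  then consider "e \<in> ?F" | a b where "e = {a,b}" "a \<noteq> b" "{?v,a} \<in> ?F" "{?v,b} \<in> ?F"
    unfolding contract_def by blast
  then show ?case
  proof cases
    case 1 then show ?thesis using Suc by blast
  next
    case 2
    have "a \<in> V" "b \<in> V"
    proof -
      obtain c d where "{?v,a} = {c,d}" "c \<in> V" "d \<in> V" using Suc.IH[OF Suc.prems(1) 2(3)] by blast
      then show "a \<in> V" by (metis doubleton_eq_iff)
    next
      obtain c d where "{?v,b} = {c,d}" "c \<in> V" "d \<in> V" using Suc.IH[OF Suc.prems(1) 2(4)] by blast
      then show "b \<in> V" by (metis doubleton_eq_iff)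
    qed
    then show ?thesis using 2 by blast
  qed
qed

lemma two_el: "simple_graph V E \<Longrightarrow> {a,b} \<in> core_edges E \<pi> k \<Longrightarrow> a \<noteq> b \<and> a \<in> V \<and> b \<in> V"
  using C1[of V E "{a,b}" \<pi> k] by (metis doubleton_eq_iff)

lemma C2: "simple_graph V E \<Longrightarrow> e \<in> core_edges E \<pi> k \<Longrightarrow> 1 \<le> i \<Longrightarrow> i \<le> k \<Longrightarrow> \<pi> i \<notin> e"
proof (induction k arbitrary: e)
  case 0 then show ?case by simp
next
  case (Suc k)
  let ?F = "core_edges E \<pi> k" and ?v = "\<pi> (Suc k)"
  have "e \<in> contract ?F ?v" using Suc.prems by simp
  then consider "e \<in> ?F" "?v \<notin> e" | a b where "e = {a,b}" "a \<noteq> b" "{?v,a} \<in> ?F" "{?v,b} \<in> ?F"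
    unfolding contract_def by blast
  then show ?case
  proof cases
    case 1 then show ?thesis using Suc by (cases "i = Suc k") auto
  next
    case 2
    have va: "?v \<noteq> a" "?v \<noteq> b" using two_el[OF Suc.prems(1) 2(3)] two_el[OF Suc.prems(1) 2(4)] by auto
    show ?thesis
    proof (cases "i = Suc k")
      case True then show ?thesis using va 2 by auto
    next
      case False
      then have "\<pi> i \<notin> {?v,a}" "\<pi> i \<notin> {?v,b}" using Suc.IH[OF Suc.prems(1) 2(3)] Suc.IH[OF Suc.prems(1) 2(4)] Suc.prems by auto
      then show ?thesis using 2 by auto
    qed
  qed
qed

lemma C3: "e \<in> core_edges E \<pi> j \<Longrightarrow> j \<le> k \<Longrightarrow> (\<forall>i. j < i \<and> i \<le> k \<longrightarrow> \<pi> i \<notin> e) \<Longrightarrow> e \<in> core_edges E \<pi> k"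
proof (induction k)
  case 0 then show ?case by simp
next
  case (Suc k)
  show ?case
  proof (cases "j = Suc k")
    case True then show ?thesis using Suc by simp
  next
    case False
    then have "e \<in> core_edges E \<pi> k" using Suc by auto
    moreover have "\<pi> (Suc k) \<notin> e" using Suc.prems False by auto
    ultimately show ?thesis by (simp add: contract_def)
  qed
qed


lemma R1: "vertex_order V \<pi> \<Longrightarrow> v \<in> V \<Longrightarrow> rank V \<pi> v \<in> {1..card V} \<and> \<pi> (rank V \<pi> v) = v"
  unfolding vertex_order_def rank_def
  by (metis bij_betw_imp_surj_on f_inv_into_f inv_into_into)

lemma R2: "vertex_order V \<pi> \<Longrightarrow> i \<in> {1..card V} \<Longrightarrow> rank V \<pi> (\<pi> i) = i"
  unfolding vertex_order_def rank_def
  by (metis bij_betw_imp_inj_on inv_into_f_f)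

lemma R3: "vertex_order V \<pi> \<Longrightarrow> i \<in> {1..card V} \<Longrightarrow> j \<in> {1..card V} \<Longrightarrow> \<pi> i = \<pi> j \<Longrightarrow> i = j"
  using R2 by metis

lemma GS1: "simple_graph V E \<Longrightarrow> e \<in> Gstar V E \<pi> \<Longrightarrow> \<exists>a b. e = {a,b} \<and> a \<noteq> b \<and> a \<in> V \<and> b \<in> V"
proof -
  assume sg: "simple_graph V E" and "e \<in> Gstar V E \<pi>"
  then obtain i where "e \<in> core_edges E \<pi> (i - 1)" unfolding Gstar_def by blast
  then show ?thesis using C1[OF sg] by blast
qed

lemma GS2: "simple_graph V E \<Longrightarrow> {a,b} \<in> Gstar V E \<pi> \<Longrightarrow> a \<noteq> b \<and> a \<in> V \<and> b \<in> V"
proof -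
  assume sg: "simple_graph V E" and "{a,b} \<in> Gstar V E \<pi>"
  then obtain i where "{a,b} \<in> core_edges E \<pi> (i - 1)" unfolding Gstar_def by blast
  then show ?thesis using two_el[OF sg] by blast
qed

lemma GS_core:
  assumes sg: "simple_graph V E" and vo: "vertex_order V \<pi>"
    and e: "{x,a} \<in> Gstar V E \<pi>" and lt: "rank V \<pi> x < rank V \<pi> a"
  shows "{x,a} \<in> core_edges E \<pi> (rank V \<pi> x - 1)"
proof -
  let ?r = "rank V \<pi> x"
  have xa: "x \<noteq> a" "x \<in> V" "a \<in> V" using GS2[OF sg e] by auto
  have rx: "?r \<in> {1..card V}" "\<pi> ?r = x" using R1[OF vo xa(2)] by auto
  have ra: "rank V \<pi> a \<in> {1..card V}" "\<pi> (rank V \<pi> a) = a" using R1[OF vo xa(3)] by auto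
  obtain i where i: "i \<in> {1..card V}" "{x,a} \<in> core_edges E \<pi> (i - 1)" using e unfolding Gstar_def by blast
  have "i - 1 < ?r"
  proof (rule ccontr)
    assume "\<not> i - 1 < ?r"
    then have "\<pi> ?r \<notin> {x,a}" using C2[OF sg i(2), of ?r] rx by auto
    then show False using rx by auto
  qed
  show ?thesis
  proof (rule C3[OF i(2)])
    show "i - 1 \<le> ?r - 1" using \<open>i - 1 < ?r\<close> by simp
    show "\<forall>i'. i - 1 < i' \<and> i' \<le> ?r - 1 \<longrightarrow> \<pi> i' \<notin> {x, a}"
    proof (intro allI impI)
      fix i' assume h: "i - 1 < i' \<and> i' \<le> ?r - 1"
      then have i'r: "i' \<in> {1..card V}" "i' < ?r" using rx by auto
      have "\<pi> i' \<noteq> x" using R3[OF vo i'r(1) rx(1)] rx(2) i'r(2) by auto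
      moreover have "\<pi> i' \<noteq> a" using R3[OF vo i'r(1) ra(1)] ra(2) i'r(2) lt by auto
      ultimately show "\<pi> i' \<notin> {x, a}" by simp
    qed
  qed
qed

lemma F2:
  assumes sg: "simple_graph V E" and vo: "vertex_order V \<pi>"
    and e1: "{x,a} \<in> Gstar V E \<pi>" and e2: "{x,b} \<in> Gstar V E \<pi>"
    and l1: "rank V \<pi> x < rank V \<pi> a" and l2: "rank V \<pi> x < rank V \<pi> b" and ab: "a \<noteq> b"
  shows "{a,b} \<in> Gstar V E \<pi>"
proof -
  let ?r = "rank V \<pi> x"
  have c1: "{x,a} \<in> core_edges E \<pi> (?r - 1)" using GS_core[OF sg vo e1 l1] .
  have c2: "{x,b} \<in> core_edges E \<pi> (?r - 1)" using GS_core[OF sg vo e2 l2] .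
  have xa: "x \<in> V" "a \<in> V" using GS2[OF sg e1] by auto
  have rx: "?r \<in> {1..card V}" "\<pi> ?r = x" using R1[OF vo xa(1)] by auto
  have ra: "rank V \<pi> a \<in> {1..card V}" using R1[OF vo xa(2)] by auto
  have "{a,b} \<in> contract (core_edges E \<pi> (?r - 1)) (\<pi> (Suc (?r - 1)))"
    unfolding contract_def using c1 c2 ab rx by auto
  moreover have "Suc (?r - 1) = ?r" using rx by simp
  ultimately have "{a,b} \<in> core_edges E \<pi> ?r" by (metis core_edges.simps(2))
  then have "{a,b} \<in> core_edges E \<pi> (Suc ?r - 1)" by simp
  moreover have "Suc ?r \<in> {1..card V}" using ra l1 by auto
  ultimately show ?thesis unfolding Gstar_def by blast
qed



lemma ud_second:
  assumes "up_down rk (x#v#p)" "y \<in> set (v#p)" "rk x < rk y"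
  shows "rk x < rk v"
proof -
  obtain j where j: "j < length (x#v#p)" "sorted_wrt (<) (map rk (take (Suc j) (x#v#p)))"
    "sorted_wrt (>) (map rk (drop j (x#v#p)))" using assms(1) unfolding up_down_def by blast
  show ?thesis
  proof (cases j)
    case 0
    then have "\<forall>u\<in>set (v#p). rk x > rk u" using j(3) by simp
    then show ?thesis using assms(2,3) by force
  next
    case (Suc j')
    then show ?thesis using j(2) by simp
  qed
qed

theorem mainTheorem6:
  fixes V :: "'a set" and E :: "'a set set" and w :: "'a set \<Rightarrow> real"
    and \<pi> :: "nat \<Rightarrow> 'a" and mC :: "'a set \<Rightarrow> ereal" and es :: "('a \<times> 'a) list"
  assumes "simple_graph V E"
    and "connected_graph V E"
    and "\<forall>e\<in>E. w e > 0"
    and "vertex_order V \<pi>"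
    and "customized V E \<pi> w mC"
    and "valid_order V E \<pi> es"
  shows "\<forall>x y. {x, y} \<in> Gstar V E \<pi> \<longrightarrow>
           perfect_customization V E \<pi> es mC {x, y} = dist_I E w x y"
proof -
  let ?GS = "Gstar V E \<pi>" and ?rk = "rank V \<pi>"
  define D where "D = dist ?GS mC"
  note sg = assms(1) and vo = assms(4)
  have cust: "is_metric V E \<pi> mC" "respects_w V E \<pi> w mC"
    "\<forall>s\<in>V. \<forall>t\<in>V. dist_UD V E \<pi> mC s t = dist_A V E \<pi> mC s t"
    using assms(5) unfolding customized_def by auto
  have nonneg: "\<forall>e\<in>?GS. mC e \<ge> 0" using cust(1) unfolding is_metric_def by (auto intro: less_imp_le)
  have ec: "\<forall>e\<in>?GS. \<exists>a b. e = {a,b} \<and> a \<in> V \<and> b \<in> V" using GS1[OF sg] by blast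
  have fin: "finite V" using sg unfolding simple_graph_def by simp
  have Dtri: "\<And>a b z. D a b \<le> D a z + D z b" unfolding D_def using dist_tri[OF ec fin nonneg] by blast
  have Dsym: "\<And>a b. D a b = D b a" unfolding D_def by (rule dist_sym)
  have DI: "\<And>a b. a \<in> V \<Longrightarrow> b \<in> V \<Longrightarrow> D a b = dist_I E w a b"
    using cust(2) unfolding respects_w_def dist_A_def D_def by blast
  have DUD: "\<And>a b. a \<in> V \<Longrightarrow> b \<in> V \<Longrightarrow> D a b = Inf {plen mC p | p. is_path ?GS p a b \<and> up_down ?rk p}"
  proof -
    fix a b assume "a \<in> V" "b \<in> V"
    then have "dist_UD V E \<pi> mC a b = dist_A V E \<pi> mC a b" using cust(3) by blast
    then show "D a b = Inf {plen mC p | p. is_path ?GS p a b \<and> up_down ?rk p}"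
      by (simp add: dist_UD_def dist_A_def D_def)
  qed
  have ord1: "\<forall>(x,y)\<in>set es. ?rk x < ?rk y"
    and ord2: "distinct (map (\<lambda>(x,y). {x,y}) es)"
    and ord3: "set (map (\<lambda>(x,y). {x,y}) es) = ?GS"
    and ord4: "sorted_wrt (\<lambda>(x,_) (x',_). ?rk x \<ge> ?rk x') es"
    using assms(6) unfolding valid_order_def by auto
  have Dle_path: "\<And>p a b. is_path ?GS p a b \<Longrightarrow> D a b \<le> plen mC p"
    unfolding D_def dist_def by (blast intro: Inf_lower)
  have Dle_edge: "\<And>a b. {a,b} \<in> ?GS \<Longrightarrow> D a b \<le> mC {a,b}"
  proof -
    fix a b assume h: "{a,b} \<in> ?GS"
    then have "a \<noteq> b" using GS2[OF sg] by blast
    then have "is_path ?GS [a,b] a b" using h by (simp add: is_path_rec)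
    moreover have "plen mC [a,b] = mC {a,b}" by (simp add: pl_eq)
    ultimately show "D a b \<le> mC {a,b}" using Dle_path[of "[a,b]" a b] by simp
  qed
  define M where "M k = foldl (perfect_step V E \<pi>) mC (take k es)" for k
  have inv: "(\<forall>e. M k e \<le> mC e) \<and> (\<forall>a b. {a,b} \<in> ?GS \<longrightarrow> D a b \<le> M k {a,b}) \<and>
     (\<forall>i<k. M k {fst (es!i), snd (es!i)} = D (fst (es!i)) (snd (es!i)))" if "k \<le> length es" for k
    using that
  proof (induction k)
    case 0
    then show ?case using Dle_edge by (simp add: M_def)
  next
    case (Suc k)
    have k: "k < length es" using Suc.prems by simp
    have I1: "\<forall>e. M k e \<le> mC e" and I2: "\<forall>a b. {a,b} \<in> ?GS \<longrightarrow> D a b \<le> M k {a,b}"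
      and I3: "\<forall>i<k. M k {fst (es!i), snd (es!i)} = D (fst (es!i)) (snd (es!i))"
      using Suc.IH Suc.prems by auto
    obtain x y where xy: "es!k = (x,y)" by (cases "es!k")
    define S where "S = {z. z \<noteq> y \<and> ?rk z > ?rk x \<and> {x,z} \<in> ?GS \<and> {z,y} \<in> ?GS}"
    define nv where "nv = min (M k {x,y}) (INF z\<in>S. M k {x,z} + M k {z,y})"
    have "M (Suc k) = perfect_step V E \<pi> (M k) (es!k)"
      unfolding M_def using k by (simp add: take_Suc_conv_app_nth)
    then have Mk1: "M (Suc k) = (M k)({x,y} := nv)"
      unfolding xy perfect_step_def nv_def S_def by simp
    have xyin: "(x,y) \<in> set es" using k xy by (metis nth_mem)
    have rxy: "?rk x < ?rk y" using ord1 xyin by auto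
    have xyGS: "{x,y} \<in> ?GS" using ord3 xyin by force
    have xyV: "x \<noteq> y" "x \<in> V" "y \<in> V" using GS2[OF sg xyGS] by auto
    have lower: "D x y \<le> nv"
    proof -
      have "D x y \<le> M k {x,y}" using I2 xyGS by blast
      moreover have "D x y \<le> (INF z\<in>S. M k {x,z} + M k {z,y})"
      proof (rule INF_greatest)
        fix z assume "z \<in> S"
        then have "{x,z} \<in> ?GS" "{z,y} \<in> ?GS" unfolding S_def by auto
        then have "D x z + D z y \<le> M k {x,z} + M k {z,y}" using I2 by (blast intro: add_mono)
        then show "D x y \<le> M k {x,z} + M k {z,y}" using Dtri[of x y z] by simp
      qed
      ultimately show ?thesis unfolding nv_def by simp
    qed
    have upper: "nv \<le> D x y"
      unfolding DUD[OF xyV(2,3)]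
    proof (rule Inf_greatest)
      fix u assume "u \<in> {plen mC p | p. is_path ?GS p x y \<and> up_down ?rk p}"
      then obtain p where p: "u = plen mC p" "is_path ?GS p x y" "up_down ?rk p" by blast
      obtain p' where pp: "p = x # p'" using p(2) by (cases p) (auto simp: is_path_rec)
      have "p' \<noteq> []" using p(2) pp xyV(1) by (auto simp: is_path_rec)
      then obtain v p'' where pv: "p' = v # p''" by (cases p') auto
      show "nv \<le> u"
      proof (cases "p'' = []")
        case True
        then have "v = y" using p(2) pp pv by (simp add: is_path_rec)
        then have "u = mC {x,y}" using p(1) pp pv True by (simp add: pl_eq)
        moreover have "nv \<le> M k {x,y}" unfolding nv_def by simp
        ultimately show ?thesis using I1 by (metis order_trans)
      next
        case False
        have pathp: "p \<noteq> []" "hd p = x" "last p = y" "distinct p" "walk ?GS p"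
          using p(2) unfolding is_path_rec by auto
        have yin: "y \<in> set p''" using pathp(3) pp pv False last_in_set[OF False] by simp
        have vy: "v \<noteq> y" using pathp(4) pp pv yin by auto
        have xv: "x \<noteq> v" using pathp(4) pp pv by auto
        have rxv: "?rk x < ?rk v" using ud_second[of ?rk x v p'' y] p(3) pp pv yin rxy by simp
        have xvGS: "{x,v} \<in> ?GS" using pathp(5) pp pv by simp
        have vyGS: "{v,y} \<in> ?GS" using F2[OF sg vo xvGS xyGS rxv rxy vy] .
        have vS: "v \<in> S" unfolding S_def using vy rxv xvGS vyGS by simp
        have tailpath: "is_path ?GS (v#p'') v y" using p(2) pp pv unfolding is_path_rec by auto
        have "M k {v,y} = D v y"
        proof -
          have "{v,y} \<in> set (map (\<lambda>(x,y). {x,y}) es)" using vyGS ord3 by simp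
          then obtain j where j0: "j < length (map (\<lambda>(x,y). {x,y}) es)" "map (\<lambda>(x,y). {x,y}) es ! j = {v,y}"
            unfolding in_set_conv_nth by blast
          then have j: "j < length es" "(\<lambda>(x,y). {x,y}) (es!j) = {v,y}" by simp_all
          obtain a b where ab: "es!j = (a,b)" by (cases "es!j")
          have abvy: "{a,b} = {v,y}" using j(2) ab by simp
          have "j < k"
          proof (rule ccontr)
            assume "\<not> j < k"
            then consider "j = k" | "k < j" by linarith
            then show False
            proof cases
              case 1
              then have "{x,y} = {v,y}" using abvy ab xy by simp
              then show False using xv xyV(1) unfolding doubleton_eq_iff by auto
            next
              case 2
              have "(\<lambda>(x,_) (x',_). ?rk x \<ge> ?rk x') (es!k) (es!j)"
                using sorted_wrt_nth_less[OF ord4 2 j(1)] .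
              then have "?rk a \<le> ?rk x" using ab xy by simp
              moreover have "a = v \<or> a = y" using abvy unfolding doubleton_eq_iff by auto
              ultimately show False using rxv rxy by auto
            qed
          qed
          then have "M k {a,b} = D a b" using I3 ab by (metis fst_conv snd_conv)
          moreover have "D a b = D v y" using abvy Dsym unfolding doubleton_eq_iff by auto
          ultimately show ?thesis using abvy by simp
        qed
        have "nv \<le> (INF z\<in>S. M k {x,z} + M k {z,y})" unfolding nv_def by simp
        also have "\<dots> \<le> M k {x,v} + M k {v,y}" using vS by (rule INF_lower)
        also have "\<dots> \<le> mC {x,v} + plen mC (v#p'')"
          using I1 Dle_path[OF tailpath] \<open>M k {v,y} = D v y\<close> by (metis add_mono)
        also have "\<dots> = u" using p(1) pp pv by (simp add: pl_eq)
        finally show ?thesis .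
      qed
    qed
    have nvD: "nv = D x y" using lower upper by simp
    show ?case
    proof (intro conjI allI impI)
      fix e show "M (Suc k) e \<le> mC e"
      proof (cases "e = {x,y}")
        case True
        have "nv \<le> M k {x,y}" unfolding nv_def by simp
        then show ?thesis using True Mk1 I1 by (metis fun_upd_same order_trans)
      qed (simp add: Mk1 I1)
    next
      fix a b assume ab: "{a,b} \<in> ?GS"
      show "D a b \<le> M (Suc k) {a,b}"
      proof (cases "{a,b} = {x,y}")
        case True
        then have "D a b = D x y" using Dsym unfolding doubleton_eq_iff by auto
        then show ?thesis using True Mk1 nvD by simp
      next
        case False then show ?thesis using Mk1 I2 ab by simp
      qed
    next
      fix i assume i: "i < Suc k"
      show "M (Suc k) {fst (es!i), snd (es!i)} = D (fst (es!i)) (snd (es!i))"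
      proof (cases "i = k")
        case True then show ?thesis using Mk1 nvD xy by simp
      next
        case False
        then have ik: "i < k" using i by simp
        have "map (\<lambda>(x,y). {x,y}) es ! i \<noteq> map (\<lambda>(x,y). {x,y}) es ! k"
        proof
          assume "map (\<lambda>(x,y). {x,y}) es ! i = map (\<lambda>(x,y). {x,y}) es ! k"
          moreover have "i < length (map (\<lambda>(x,y). {x,y}) es)" "k < length (map (\<lambda>(x,y). {x,y}) es)"
            using ik k by simp_all
          ultimately have "i = k" using nth_eq_iff_index_eq[OF ord2] by blast
          then show False using ik by simp
        qed
        then have "{fst (es!i), snd (es!i)} \<noteq> {x,y}" using ik k xy by (simp add: case_prod_beta)
        then show ?thesis using Mk1 I3 ik by simp
      qed
    qed
  qed
  have fin_eq: "M (length es) = perfect_customization V E \<pi> es mC"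
    unfolding M_def perfect_customization_def by simp
  note I = inv[of "length es", simplified fin_eq]
  show ?thesis
  proof (intro allI impI)
    fix x y assume xy: "{x,y} \<in> ?GS"
    then have xyV: "x \<in> V" "y \<in> V" using GS2[OF sg] by auto
    have "{x,y} \<in> set (map (\<lambda>(x,y). {x,y}) es)" using xy ord3 by simp
    then obtain j where j0: "j < length (map (\<lambda>(x,y). {x,y}) es)" "map (\<lambda>(x,y). {x,y}) es ! j = {x,y}"
      unfolding in_set_conv_nth by blast
    then have j: "j < length es" "(\<lambda>(x,y). {x,y}) (es!j) = {x,y}" by simp_all
    obtain a b where ab: "es!j = (a,b)" by (cases "es!j")
    have "{a,b} = {x,y}" using j(2) ab by simp
    moreover have "perfect_customization V E \<pi> es mC {fst (es!j), snd (es!j)} = D (fst (es!j)) (snd (es!j))"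
      using I j(1) by blast
    ultimately have "perfect_customization V E \<pi> es mC {x,y} = D a b" using ab by simp
    moreover have "D a b = D x y" using \<open>{a,b} = {x,y}\<close> Dsym unfolding doubleton_eq_iff by auto
    ultimately have "perfect_customization V E \<pi> es mC {x,y} = D x y" by simp
    then show "perfect_customization V E \<pi> es mC {x,y} = dist_I E w x y" using DI xyV by simp
  qed
qed


end
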